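(* Suppose $\tau_f\in(\tau_2^i,\tau_c)$. Then for any $\tau_b\in(\tau_{po}(\tau_f),\tau_f)$, $$p'(\tau_b)<\frac{2h(\tau_b)-2h(\tau_f)}{\tau_b^2-\tau_f^2}<p'(\tau_f),$$ and Liu's extended entropy condition $\frac{2h(\tau_f)-2h(\tau_b)}{\tau_f^2-\tau_b^2}<\frac{2h(\tau_f)-2h(\tau)}{\tau_f^2-\tau^2}$ for all $\tau\in(\tau_b,\tau_f)$ holds.
   Context: The pressure is $p(\tau)=\frac{\mathcal S}{(\tau-1)^\gamma}-\frac{1}{\tau^2}$ for $\tau>1$, with constants $1<\gamma<2$, $\mathcal S>0$, assumed such that there exist $1<\tau_1^i<\tau_2^i$ with $p'<0$ on $(1,\infty)$, $p''>0$ on $(1,\tau_1^i)\cup(\tau_2^i,\infty)$, $p''<0$ on $(\tau_1^i,\tau_2^i)$. The function $h$ satisfies $h'(\tau)=\tau p'(\tau)$. $\tau_c$ is the unique $\tau_c\in(\tau_1^i,\infty)$ with $p'(\tau_1^i)=\frac{2h(\tau_c)-2h(\tau_1^i)}{\tau_c^2-(\tau_1^i)^2}$. For $\tau_f\in(\tau_2^i,\tau_c)$, $\tau_{po}(\tau_f)$ is the unique $\tau\in(\tau_1^i,\tau_2^i)$ with $p'(\tau)=\frac{2h(\tau)-2h(\tau_f)}{\tau^2-\tau_f^2}$. *)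

theory Defs
  imports "HOL-Analysis.Analysis"
begin

definition pressure :: "real \<Rightarrow> real \<Rightarrow> real \<Rightarrow> real" where
  "pressure S \<gamma> \<tau> = S / (\<tau> - 1) powr \<gamma> - 1 / \<tau>\<^sup>2"

end

theory Submission imports Defs begin

lemma pd1: "t > 1 \<Longrightarrow> (pressure S g has_real_derivative (2 / t^3 - S * g * (t-1) powr (-g-1))) (at t)"
  unfolding pressure_def[abs_def]
  apply (rule derivative_eq_intros refl | simp)+
  apply (auto simp: powr_minus powr_diff powr_add divide_simps)
  apply (simp add: algebra_simps eval_nat_numeral)
  done

lemma pd2: "t > 1 \<Longrightarrow> ((\<lambda>t. 2 / t^3 - S * g * (t-1) powr (-g-1)) has_real_derivative (-6 / t^4 + S * g * (g+1) * (t-1) powr (-g-2))) (at t)"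
  apply (rule derivative_eq_intros refl | simp)+
  apply (auto simp: powr_minus powr_diff powr_add divide_simps)
  apply (simp add: algebra_simps eval_nat_numeral)
  done

lemma pderiv2: "t > 1 \<Longrightarrow> (deriv (pressure S g) has_real_derivative deriv (deriv (pressure S g)) t) (at t)"
proof -
  assume t: "t > 1"
  let ?p1 = "\<lambda>t. 2 / t^3 - S * g * (t-1) powr (-g-1)"
  have eq: "\<And>x. x \<in> {1<..} \<Longrightarrow> ?p1 x = deriv (pressure S g) x"
    using pd1 DERIV_imp_deriv by (metis greaterThan_iff)
  have "(deriv (pressure S g) has_real_derivative (-6 / t^4 + S * g * (g+1) * (t-1) powr (-g-2))) (at t)"
    by (rule has_field_derivative_transform_within_open[OF pd2[OF t], where S="{1<..}", OF _ _ eq]) (use t in auto)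
  then show ?thesis using DERIV_imp_deriv by metis
qed

lemma cont_lem:
  assumes "\<And>x. 1 < x \<Longrightarrow> (f has_real_derivative f' x) (at x)" "1 < a"
  shows "continuous_on {a..b} f"
  apply (rule DERIV_continuous_on[where D = f'])
  using assms by (auto intro: has_field_derivative_at_within)

lemma main_abs:
  fixes p1 p2 h :: "real \<Rightarrow> real" and \<tau>1 \<tau>2 P F b :: real
  assumes d1: "\<And>t. 1 < t \<Longrightarrow> (p1 has_real_derivative p2 t) (at t)"
    and p2pos: "\<And>t. \<tau>2 < t \<Longrightarrow> p2 t > 0"
    and p2neg: "\<And>t. \<tau>1 < t \<Longrightarrow> t < \<tau>2 \<Longrightarrow> p2 t < 0"
    and hd: "\<And>t. 1 < t \<Longrightarrow> (h has_real_derivative (t * p1 t)) (at t)"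
    and ord: "1 < \<tau>1" "\<tau>1 < P" "P < \<tau>2" "\<tau>2 < F"
    and Peq: "p1 P = (2 * h P - 2 * h F) / (P\<^sup>2 - F\<^sup>2)"
    and b: "P < b" "b < F"
  shows "p1 b < (2 * h b - 2 * h F) / (b\<^sup>2 - F\<^sup>2)
     \<and> (2 * h b - 2 * h F) / (b\<^sup>2 - F\<^sup>2) < p1 F
     \<and> (\<forall>\<tau>. b < \<tau> \<and> \<tau> < F \<longrightarrow>
          (2 * h F - 2 * h b) / (F\<^sup>2 - b\<^sup>2) < (2 * h F - 2 * h \<tau>) / (F\<^sup>2 - \<tau>\<^sup>2))"
proof -
  define N where "N x = p1 x * (x\<^sup>2 - F\<^sup>2) - (2 * h x - 2 * h F)" for x
  have Nd: "(N has_real_derivative p2 x * (x\<^sup>2 - F\<^sup>2)) (at x)" if "1 < x" for x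
    unfolding N_def[abs_def]
    by (rule derivative_eq_intros refl d1 hd that | simp add: algebra_simps)+
  have sq: "x\<^sup>2 < F\<^sup>2" if "1 < x" "x < F" for x
    using that by (simp add: power_strict_mono)
  have NP: "N P = 0"
  proof -
    have "P\<^sup>2 - F\<^sup>2 \<noteq> 0" using sq[of P] ord by auto
    then show ?thesis using Peq unfolding N_def by (simp add: field_simps)
  qed
  have NF: "N F = 0" unfolding N_def by simp
  have Npos: "N x > 0" if x: "P < x" "x < F" for x
  proof (cases "x \<le> \<tau>2")
    case True
    have "N P < N x"
    proof (rule DERIV_pos_imp_increasing_open[OF x(1)])
      fix y assume y: "P < y" "y < x"
      have "p2 y * (y\<^sup>2 - F\<^sup>2) > 0"
        using p2neg[of y] sq[of y] y True ord by (intro mult_neg_neg) auto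
      then show "\<exists>z. DERIV N y :> z \<and> z > 0" using Nd[of y] y ord by auto
    next
      show "continuous_on {P..x} N" by (rule cont_lem[OF Nd]) (use ord in auto)
    qed
    then show ?thesis using NP by simp
  next
    case False
    have "N F < N x"
    proof (rule DERIV_neg_imp_decreasing_open[OF x(2)])
      fix y assume y: "x < y" "y < F"
      have "p2 y * (y\<^sup>2 - F\<^sup>2) < 0"
        using p2pos[of y] sq[of y] y False ord by (intro mult_pos_neg) auto
      then show "\<exists>z. DERIV N y :> z \<and> z < 0" using Nd[of y] y ord x by auto
    next
      show "continuous_on {x..F} N" by (rule cont_lem[OF Nd]) (use ord x in auto)
    qed
    then show ?thesis using NF by simp
  qed
  define \<sigma> where "\<sigma> x = (2 * h x - 2 * h F) / (x\<^sup>2 - F\<^sup>2)" for x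
  have \<sigma>d: "(\<sigma> has_real_derivative 2 * x * N x / (x\<^sup>2 - F\<^sup>2)\<^sup>2) (at x)" if "1 < x" "x < F" for x
  proof -
    have ne: "x\<^sup>2 - F\<^sup>2 \<noteq> 0" using sq[OF that] by simp
    show ?thesis
      unfolding \<sigma>_def[abs_def]
      apply (rule derivative_eq_intros refl hd that | simp add: ne)+
      using ne apply (simp_all add: power2_eq_square[symmetric])
      apply (simp add: N_def power2_eq_square[symmetric] algebra_simps)
      done
  qed
  have \<sigma>inc: "\<sigma> x < \<sigma> y" if "P < x" "x < y" "y < F" for x y
  proof (rule DERIV_pos_imp_increasing_open[OF that(2)])
    fix z assume z: "x < z" "z < y"
    have "2 * z * N z / (z\<^sup>2 - F\<^sup>2)\<^sup>2 > 0"
      using Npos[of z] sq[of z] z that ord by (intro divide_pos_pos mult_pos_pos) auto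
    then show "\<exists>w. DERIV \<sigma> z :> w \<and> w > 0" using \<sigma>d[of z] z that ord by auto
  next
    show "continuous_on {x..y} \<sigma>"
      by (rule DERIV_continuous_on[where D = "\<lambda>x. 2 * x * N x / (x\<^sup>2 - F\<^sup>2)\<^sup>2"])
         (use \<sigma>d that ord in \<open>auto intro: has_field_derivative_at_within\<close>)
  qed
  have c1: "p1 b < \<sigma> b"
  proof -
    have neg: "b\<^sup>2 - F\<^sup>2 < 0" using sq[of b] b ord by auto
    have "p1 b - \<sigma> b = N b / (b\<^sup>2 - F\<^sup>2)"
      using neg unfolding N_def \<sigma>_def by (simp add: field_simps)
    also have "\<dots> < 0" using Npos[OF b] neg by (simp add: divide_pos_neg)
    finally show ?thesis by simp
  qed
  have c2: "\<sigma> b < p1 F"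
  proof -
    define x where "x = (max b \<tau>2 + F) / 2"
    have x: "b < x" "\<tau>2 < x" "x < F" using b ord unfolding x_def by auto
    have p1inc: "p1 y < p1 F" if "\<tau>2 < y" "y < F" for y
    proof (rule DERIV_pos_imp_increasing_open[OF that(2)])
      fix z assume "y < z" "z < F"
      then show "\<exists>w. DERIV p1 z :> w \<and> w > 0" using d1[of z] p2pos[of z] that ord by auto
    next
      show "continuous_on {y..F} p1" by (rule cont_lem[OF d1]) (use that ord in auto)
    qed
    define G where "G t = 2 * h t - p1 F * t\<^sup>2" for t
    have Gd: "(G has_real_derivative 2 * (y * p1 y) - p1 F * (2 * y)) (at y)" if "1 < y" for y
      unfolding G_def[abs_def]
      by (rule derivative_eq_intros refl hd that | simp)+
    have "G F < G x"
    proof (rule DERIV_neg_imp_decreasing_open[OF x(3)])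
      fix y assume y: "x < y" "y < F"
      have "2 * (y * p1 y) - p1 F * (2 * y) = 2 * y * (p1 y - p1 F)" by (simp add: algebra_simps)
      also have "\<dots> < 0" using p1inc[of y] y x ord by (intro mult_pos_neg) auto
      finally show "\<exists>z. DERIV G y :> z \<and> z < 0" using Gd[of y] y x ord by auto
    next
      show "continuous_on {x..F} G" by (rule cont_lem[OF Gd]) (use x ord in auto)
    qed
    then have "p1 F * (x\<^sup>2 - F\<^sup>2) < 2 * h x - 2 * h F" unfolding G_def by (simp add: algebra_simps)
    moreover have "x\<^sup>2 - F\<^sup>2 < 0" using sq[of x] x ord by auto
    ultimately have "\<sigma> x < p1 F" unfolding \<sigma>_def by (simp add: pos_less_divide_eq neg_divide_less_eq)
    moreover have "\<sigma> b < \<sigma> x" using \<sigma>inc[of b x] b x by auto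
    ultimately show ?thesis by simp
  qed
  have sw: "(2 * h F - 2 * h t) / (F\<^sup>2 - t\<^sup>2) = \<sigma> t" for t
    unfolding \<sigma>_def by (metis minus_diff_eq minus_divide_divide)
  show ?thesis using c1 c2 \<sigma>inc b unfolding sw by (auto simp: \<sigma>_def)
qed

theorem proposition3p4:
  fixes S \<gamma> \<tau>1 \<tau>2 \<tau>c \<tau>po \<tau>f :: real and h :: "real \<Rightarrow> real"
  defines "p \<equiv> pressure S \<gamma>"
  assumes gamma: "1 < \<gamma>" "\<gamma> < 2" and S: "S > 0"
    and tau12: "1 < \<tau>1" "\<tau>1 < \<tau>2"
    and p1_neg: "\<And>t. 1 < t \<Longrightarrow> deriv p t < 0"
    and p2_pos: "\<And>t. (1 < t \<and> t < \<tau>1) \<or> \<tau>2 < t \<Longrightarrow> deriv (deriv p) t > 0"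
    and p2_neg: "\<And>t. \<tau>1 < t \<Longrightarrow> t < \<tau>2 \<Longrightarrow> deriv (deriv p) t < 0"
    and h_deriv: "\<And>t. 1 < t \<Longrightarrow> (h has_real_derivative (t * deriv p t)) (at t)"
    and tauc: "\<tau>1 < \<tau>c"
      "deriv p \<tau>1 = (2 * h \<tau>c - 2 * h \<tau>1) / (\<tau>c\<^sup>2 - \<tau>1\<^sup>2)"
    and tauc_unique: "\<And>t. \<tau>1 < t \<Longrightarrow>
        deriv p \<tau>1 = (2 * h t - 2 * h \<tau>1) / (t\<^sup>2 - \<tau>1\<^sup>2) \<Longrightarrow> t = \<tau>c"
    and tauf: "\<tau>2 < \<tau>f" "\<tau>f < \<tau>c"
    and taupo: "\<tau>1 < \<tau>po" "\<tau>po < \<tau>2"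
      "deriv p \<tau>po = (2 * h \<tau>po - 2 * h \<tau>f) / (\<tau>po\<^sup>2 - \<tau>f\<^sup>2)"
    and taupo_unique: "\<And>t. \<tau>1 < t \<Longrightarrow> t < \<tau>2 \<Longrightarrow>
        deriv p t = (2 * h t - 2 * h \<tau>f) / (t\<^sup>2 - \<tau>f\<^sup>2) \<Longrightarrow> t = \<tau>po"
  shows "\<forall>\<tau>b. \<tau>po < \<tau>b \<and> \<tau>b < \<tau>f \<longrightarrow>
     deriv p \<tau>b < (2 * h \<tau>b - 2 * h \<tau>f) / (\<tau>b\<^sup>2 - \<tau>f\<^sup>2)
     \<and> (2 * h \<tau>b - 2 * h \<tau>f) / (\<tau>b\<^sup>2 - \<tau>f\<^sup>2) < deriv p \<tau>f
     \<and> (\<forall>\<tau>. \<tau>b < \<tau> \<and> \<tau> < \<tau>f \<longrightarrow>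
          (2 * h \<tau>f - 2 * h \<tau>b) / (\<tau>f\<^sup>2 - \<tau>b\<^sup>2) < (2 * h \<tau>f - 2 * h \<tau>) / (\<tau>f\<^sup>2 - \<tau>\<^sup>2))"
  proof (intro allI impI)
  fix b assume b: "\<tau>po < b \<and> b < \<tau>f"
  show "deriv p b < (2 * h b - 2 * h \<tau>f) / (b\<^sup>2 - \<tau>f\<^sup>2)
     \<and> (2 * h b - 2 * h \<tau>f) / (b\<^sup>2 - \<tau>f\<^sup>2) < deriv p \<tau>f
     \<and> (\<forall>\<tau>. b < \<tau> \<and> \<tau> < \<tau>f \<longrightarrow>
          (2 * h \<tau>f - 2 * h b) / (\<tau>f\<^sup>2 - b\<^sup>2) < (2 * h \<tau>f - 2 * h \<tau>) / (\<tau>f\<^sup>2 - \<tau>\<^sup>2))"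
  proof (rule main_abs[where ?p2.0 = "deriv (deriv p)" and ?\<tau>1.0 = \<tau>1 and ?\<tau>2.0 = \<tau>2 and P = \<tau>po])
    show "\<And>t. 1 < t \<Longrightarrow> (deriv p has_real_derivative deriv (deriv p) t) (at t)"
      unfolding p_def by (rule pderiv2)
    show "\<And>t. \<tau>2 < t \<Longrightarrow> 0 < deriv (deriv p) t" using p2_pos by blast
  qed (use p2_neg h_deriv tau12 taupo tauf b in auto)
qed

end
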